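(* For $0\le i\le n$, $dp(h,i)$ is strictly increasing (in lexicographic order) for $0\le h\le i$.
   Context: Let $x_0\le x_1\le\cdots\le x_{n+1}$ be real numbers, $\{x\}=x-\lfloor x\rfloor$, and let $\pi=(\pi_0,\dots,\pi_{n+1})$ be the permutation of $\{0,\dots,n+1\}$ such that for $0\le i<j\le n+1$, $\pi_i>\pi_j$ iff $(\{x_i\},-x_i,i)<(\{x_j\},-x_j,j)$ lexicographically. For a sequence of indices $s_0<\cdots<s_k$, a drop is a consecutive pair $(s_{h-1},s_h)$ with $\pi_{s_{h-1}}>\pi_{s_h}$. For $0\le h\le i\le n$, $dp(h,i)$ is the pair $(d(h,i),p(h,i))$, where $d(h,i)$ is the minimum number of drops over all sequences of $h+1$ indices $0=s_0<s_1<\cdots<s_h\le i$, and $p(h,i)$ is the minimum of $\pi_{s_h}$ over all such sequences having exactly $d(h,i)$ drops. Pairs are compared lexicographically. *)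

theory Defs
  imports Complex_Main
begin

definition key_less :: "(nat \<Rightarrow> real) \<Rightarrow> nat \<Rightarrow> nat \<Rightarrow> bool" where
  "key_less x i j \<longleftrightarrow>
     frac (x i) < frac (x j) \<or>
     (frac (x i) = frac (x j) \<and> (- x i < - x j \<or> (- x i = - x j \<and> i < j)))"

definition is_pi :: "nat \<Rightarrow> (nat \<Rightarrow> real) \<Rightarrow> (nat \<Rightarrow> nat) \<Rightarrow> bool" where
  "is_pi n x \<pi> \<longleftrightarrow> bij_betw \<pi> {0..n+1} {0..n+1} \<and>
     (\<forall>i j. i < j \<and> j \<le> n + 1 \<longrightarrow> (\<pi> i > \<pi> j \<longleftrightarrow> key_less x i j))"

definition valid_seq :: "nat \<Rightarrow> nat \<Rightarrow> (nat \<Rightarrow> nat) \<Rightarrow> bool" where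
  "valid_seq h i s \<longleftrightarrow> s 0 = 0 \<and> (\<forall>k<h. s k < s (Suc k)) \<and> s h \<le> i"

definition drops :: "(nat \<Rightarrow> nat) \<Rightarrow> nat \<Rightarrow> (nat \<Rightarrow> nat) \<Rightarrow> nat" where
  "drops \<pi> h s = card {k \<in> {1..h}. \<pi> (s (k - 1)) > \<pi> (s k)}"

definition d :: "(nat \<Rightarrow> nat) \<Rightarrow> nat \<Rightarrow> nat \<Rightarrow> nat" where
  "d \<pi> h i = Min {drops \<pi> h s | s. valid_seq h i s}"

definition p :: "(nat \<Rightarrow> nat) \<Rightarrow> nat \<Rightarrow> nat \<Rightarrow> nat" where
  "p \<pi> h i = Min {\<pi> (s h) | s. valid_seq h i s \<and> drops \<pi> h s = d \<pi> h i}"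

definition dp :: "(nat \<Rightarrow> nat) \<Rightarrow> nat \<Rightarrow> nat \<Rightarrow> nat \<times> nat" where
  "dp \<pi> h i = (d \<pi> h i, p \<pi> h i)"

definition lex_less :: "nat \<times> nat \<Rightarrow> nat \<times> nat \<Rightarrow> bool" where
  "lex_less a b \<longleftrightarrow> fst a < fst b \<or> (fst a = fst b \<and> snd a < snd b)"

end

theory Submission imports Defs begin
lemma drops_Suc:
  "drops \<pi> (Suc h) s = drops \<pi> h s + (if \<pi> (s h) > \<pi> (s (Suc h)) then 1 else 0)"
proof -
  have e: "{k \<in> {1..Suc h}. \<pi> (s (k - 1)) > \<pi> (s k)} =
        {k \<in> {1..h}. \<pi> (s (k - 1)) > \<pi> (s k)} \<union>
        (if \<pi> (s h) > \<pi> (s (Suc h)) then {Suc h} else {})"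
    by (auto simp: le_Suc_eq)
  show ?thesis unfolding drops_def e
    by (subst card_Un_disjoint) auto
qed

lemma drops_le: "drops \<pi> h s \<le> h"
proof -
  have "drops \<pi> h s \<le> card {1..h}" unfolding drops_def
    by (rule card_mono) auto
  then show ?thesis by simp
qed
lemma valid_exists: "h \<le> i \<Longrightarrow> valid_seq h i (\<lambda>k. k)"
  by (simp add: valid_seq_def)

lemma d_props:
  assumes "h \<le> i"
  shows "d \<pi> h i \<in> {drops \<pi> h s | s. valid_seq h i s}"
    and "\<And>s. valid_seq h i s \<Longrightarrow> d \<pi> h i \<le> drops \<pi> h s"
proof -
  have sub: "{drops \<pi> h s | s. valid_seq h i s} \<subseteq> {0..h}"
    using drops_le by fastforce
  have fin: "finite {drops \<pi> h s | s. valid_seq h i s}"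
    using finite_subset[OF sub] by simp
  have ne: "{drops \<pi> h s | s. valid_seq h i s} \<noteq> {}"
    using valid_exists[OF assms] by blast
  show "d \<pi> h i \<in> {drops \<pi> h s | s. valid_seq h i s}"
    unfolding d_def using Min_in[OF fin ne] .
  fix s assume "valid_seq h i s"
  then have "drops \<pi> h s \<in> {drops \<pi> h s | s. valid_seq h i s}" by blast
  then show "d \<pi> h i \<le> drops \<pi> h s"
    unfolding d_def using fin by (rule Min_le[rotated])
qed

lemma p_props:
  assumes "h \<le> i"
  shows "p \<pi> h i \<in> {\<pi> (s h) | s. valid_seq h i s \<and> drops \<pi> h s = d \<pi> h i}"
    and "\<And>s. valid_seq h i s \<Longrightarrow> drops \<pi> h s = d \<pi> h i \<Longrightarrow> p \<pi> h i \<le> \<pi> (s h)"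
proof -
  have sub: "{\<pi> (s h) | s. valid_seq h i s \<and> drops \<pi> h s = d \<pi> h i} \<subseteq> \<pi> ` {0..i}"
  proof
    fix y assume "y \<in> {\<pi> (s h) | s. valid_seq h i s \<and> drops \<pi> h s = d \<pi> h i}"
    then obtain s where "y = \<pi> (s h)" "s h \<le> i" unfolding valid_seq_def by blast
    then show "y \<in> \<pi> ` {0..i}" by simp
  qed
  have fin: "finite {\<pi> (s h) | s. valid_seq h i s \<and> drops \<pi> h s = d \<pi> h i}"
    using finite_subset[OF sub] by simp
  have ne: "{\<pi> (s h) | s. valid_seq h i s \<and> drops \<pi> h s = d \<pi> h i} \<noteq> {}"
  proof -
    obtain s where "valid_seq h i s" "d \<pi> h i = drops \<pi> h s"
      using d_props(1)[OF assms, of \<pi>] by blast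
    then show ?thesis by auto
  qed
  show "p \<pi> h i \<in> {\<pi> (s h) | s. valid_seq h i s \<and> drops \<pi> h s = d \<pi> h i}"
    unfolding p_def using Min_in[OF fin ne] .
  fix s assume "valid_seq h i s" "drops \<pi> h s = d \<pi> h i"
  then have "\<pi> (s h) \<in> {\<pi> (s h) | s. valid_seq h i s \<and> drops \<pi> h s = d \<pi> h i}" by blast
  then show "p \<pi> h i \<le> \<pi> (s h)"
    unfolding p_def using fin by (rule Min_le[rotated])
qed
lemma step:
  assumes inj: "inj_on \<pi> {0..n+1}" and hi: "Suc h \<le> i" and iN: "i \<le> n"
  shows "lex_less (dp \<pi> h i) (dp \<pi> (Suc h) i)"
proof -
  obtain s where vs: "valid_seq (Suc h) i s" and ds: "drops \<pi> (Suc h) s = d \<pi> (Suc h) i"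
    and ps: "p \<pi> (Suc h) i = \<pi> (s (Suc h))"
    using p_props(1)[OF hi, of \<pi>] by auto
  have lt: "s h < s (Suc h)" and le: "s (Suc h) \<le> i" using vs by (auto simp: valid_seq_def)
  have vh: "valid_seq h i s" using vs lt le by (auto simp: valid_seq_def)
  have dh: "d \<pi> h i \<le> drops \<pi> h s" using d_props(2)[OF _ vh] hi by simp
  show ?thesis
  proof (cases "\<pi> (s h) > \<pi> (s (Suc h))")
    case True
    then show ?thesis using dh ds drops_Suc[of \<pi> h s] by (simp add: lex_less_def dp_def)
  next
    case False
    have ne: "\<pi> (s h) \<noteq> \<pi> (s (Suc h))"
      using inj lt le iN by (auto dest: inj_onD)
    have eq: "drops \<pi> (Suc h) s = drops \<pi> h s" using False drops_Suc[of \<pi> h s] by simp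
    show ?thesis
    proof (cases "d \<pi> h i < d \<pi> (Suc h) i")
      case True then show ?thesis by (simp add: lex_less_def dp_def)
    next
      case F2: False
      then have "drops \<pi> h s = d \<pi> h i" using dh eq ds by simp
      then have "p \<pi> h i \<le> \<pi> (s h)" using p_props(2)[OF _ vh] hi by simp
      then show ?thesis using F2 False ne ps dh eq ds by (simp add: lex_less_def dp_def)
    qed
  qed
qed

lemma lex_trans: "lex_less a b \<Longrightarrow> lex_less b c \<Longrightarrow> lex_less a c"
  by (auto simp: lex_less_def)

theorem lemma6:
  fixes n :: nat and x :: "nat \<Rightarrow> real" and \<pi> :: "nat \<Rightarrow> nat"
  assumes sorted: "\<And>i j. i \<le> j \<Longrightarrow> j \<le> n + 1 \<Longrightarrow> x i \<le> x j"
    and pi: "is_pi n x \<pi>"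
  shows "\<forall>i \<le> n. \<forall>h1 h2. h1 < h2 \<and> h2 \<le> i \<longrightarrow> lex_less (dp \<pi> h1 i) (dp \<pi> h2 i)"
proof (intro allI impI, elim conjE)
  fix i h1 h2 assume iN: "i \<le> n" and lt: "h1 < h2" and h2i: "h2 \<le> i"
  have inj: "inj_on \<pi> {0..n+1}" using pi by (simp add: is_pi_def bij_betw_def)
  have main: "Suc h1 + k \<le> i \<Longrightarrow> lex_less (dp \<pi> h1 i) (dp \<pi> (Suc h1 + k) i)" for k
  proof (induction k)
    case 0 then show ?case using step[OF inj _ iN, of h1] by simp
  next
    case (Suc k)
    then have a: "lex_less (dp \<pi> h1 i) (dp \<pi> (Suc h1 + k) i)" by simp
    have b: "lex_less (dp \<pi> (Suc h1 + k) i) (dp \<pi> (Suc (Suc h1 + k)) i)"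
      using step[OF inj _ iN, of "Suc h1 + k"] Suc.prems by simp
    show ?case using lex_trans[OF a b] by simp
  qed
  obtain k where "h2 = Suc h1 + k" using lt less_iff_Suc_add by blast
  then show "lex_less (dp \<pi> h1 i) (dp \<pi> h2 i)"
    using main h2i by simp
qed

end
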